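(* Let $n\ge4$ be even, let $\gamma\in\mathbb{F}_4\setminus\mathbb{F}_2$, and let $F=\mathrm{Inv}\circ(0,1,\gamma)$ on $\mathbb{F}_{2^n}$. If $c\in\mathbb{F}_4\setminus\mathbb{F}_2$, then ${}_c\Delta_F=3$ if $n\equiv2\pmod4$, ${}_c\Delta_F=4$ if $n\equiv4\pmod8$, and ${}_c\Delta_F=5$ if $n\equiv0\pmod8$.
   Context: $\mathbb{F}_4$ is the subfield of order $4$ of $\mathbb{F}_{2^n}$. $\mathrm{Inv}(x)=x^{2^n-2}$ on $\mathbb{F}_{2^n}$. $(0,1,\gamma)$ is the $3$-cycle sending $0\mapsto1$, $1\mapsto\gamma$, $\gamma\mapsto0$ and fixing all other elements; thus $F(0)=1$, $F(1)=\gamma^{-1}$, $F(\gamma)=0$ and $F(x)=x^{-1}$ otherwise. For $c\in\mathbb{F}_{2^n}$, ${}_cD_aF(x)=F(x+a)+cF(x)$; ${}_c\Delta_F(a,b)$ is the number of $x\in\mathbb{F}_{2^n}$ with ${}_cD_aF(x)=b$; and ${}_c\Delta_F=\max\{{}_c\Delta_F(a,b): a,b\in\mathbb{F}_{2^n},\ a\neq 0 \text{ if } c=1\}$. *)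

theory Defs
  imports Main
begin

text \<open>Finite field F_{2^n} is modelled by a finite field type 'a with CARD('a) = 2^n.\<close>

definition Inv :: "nat \<Rightarrow> 'a::field \<Rightarrow> 'a" where
  "Inv n x = x ^ (2^n - 2)"

definition cyc3 :: "'a::field \<Rightarrow> 'a \<Rightarrow> 'a" where
  "cyc3 g x = (if x = 0 then 1 else if x = 1 then g else if x = g then 0 else x)"

definition cDelta :: "('a::field \<Rightarrow> 'a) \<Rightarrow> 'a \<Rightarrow> 'a \<Rightarrow> 'a \<Rightarrow> nat" where
  "cDelta F c a b = card {x. F (x + a) + c * F x = b}"

definition cDU :: "('a::{field,finite} \<Rightarrow> 'a) \<Rightarrow> 'a \<Rightarrow> nat" where
  "cDU F c = Max {cDelta F c a b | a b. a \<noteq> 0 \<or> c \<noteq> 1}"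

end

theory Submission
  imports Defs "HOL-Computational_Algebra.Polynomial"
begin

lemma pow_card_eq:
  fixes x :: "'a::{field,finite}"
  shows "x ^ card (UNIV::'a set) = x"
proof (cases "x = 0")
  case True
  then show ?thesis by (simp add: power_0_left)
next
  case False
  let ?U = "UNIV - {0::'a}"
  have bij: "bij_betw (\<lambda>y. x * y) ?U ?U"
    unfolding bij_betw_def
  proof
    show "inj_on (\<lambda>y. x * y) ?U" using False by (auto simp: inj_on_def)
    show "(\<lambda>y. x * y) ` ?U = ?U"
    proof
      show "(\<lambda>y. x * y) ` ?U \<subseteq> ?U" using False by auto
      show "?U \<subseteq> (\<lambda>y. x * y) ` ?U"
      proof
        fix y assume "y \<in> ?U"
        then have "y = x * (inverse x * y)" "inverse x * y \<in> ?U" using False by (auto simp: field_simps)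
        then show "y \<in> (\<lambda>y. x * y) ` ?U" by blast
      qed
    qed
  qed
  have "prod (\<lambda>y. x * y) ?U = prod id ?U"
    using prod.reindex_bij_betw[OF bij, of id] by simp
  moreover have "prod (\<lambda>y. x * y) ?U = x ^ card ?U * prod id ?U"
    by (simp add: prod.distrib)
  moreover have "prod id ?U \<noteq> 0" by (simp add: prod_zero_iff)
  ultimately have "x ^ card ?U = 1" by simp
  moreover have "card ?U = card (UNIV::'a set) - 1" by (simp add: card_Diff_singleton)
  moreover have "card (UNIV::'a set) \<ge> 1" by (simp add: Suc_leI card_gt_0_iff)
  ultimately show ?thesis
    by (metis (no_types) One_nat_def Suc_diff_le diff_Suc_1 mult.right_neutral power_Suc)
qed

lemma char2_from_card:
  fixes x :: "'a::{field,finite}"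
  assumes "card (UNIV::'a set) = 2 ^ n" "n \<ge> 1"
  shows "(1::'a) + 1 = 0"
proof -
  have "(-1::'a) ^ (2^n) = -1" using pow_card_eq[of "-1::'a"] assms by simp
  moreover have "even ((2::nat)^n)" using assms by simp
  ultimately have "(1::'a) = -1" by simp
  then show ?thesis by (metis add.right_inverse)
qed


locale ctx =
  fixes g :: "'a::{field,finite}" and n :: nat
  assumes card: "card (UNIV::'a set) = 2^n" and n4: "n \<ge> 4" and ev: "even n"
    and gg: "g*g = g + 1"
begin

lemma two: "(1::'a) + 1 = 0" using char2_from_card[of n] card n4 by simp

lemma xx: "(x::'a) + x = 0"
  by (metis two distrib_left mult.right_neutral mult_zero_right)
lemma xxy: "(x::'a) + (x + y) = y" by (metis xx add.assoc add_0)
lemma neg: "- (x::'a) = x" by (metis xx add_eq_0_iff)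
lemma minus: "(x::'a) - y = x + y" by (metis neg diff_conv_add_uminus)
lemma ggx: "g * (g * x) = g * x + x" by (metis gg distrib_right mult.assoc mult_1)
lemma two': "(2::'a) = 0" by (metis two one_add_one)
lemma eq_iff_add: "((x::'a) = y) = (x + y = 0)" by (metis xx xxy add.commute add_0)

lemmas nz = xx xxy neg minus ggx gg two' algebra_simps

lemma frob: "((x::'a) + y)^2 = x^2 + y^2"
  by (simp add: power2_eq_square nz)
lemma frob_pow: "((x::'a) + y)^(2^k) = x^(2^k) + y^(2^k)"
proof (induction k)
  case 0 then show ?case by simp
next
  case (Suc k)
  have "(x + y)^(2^Suc k) = ((x+y)^(2^k))^2" by (simp add: power_mult[symmetric] mult.commute)
  also have "\<dots> = (x^(2^k))^2 + (y^(2^k))^2" using Suc frob by simp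
  also have "\<dots> = x^(2^Suc k) + y^(2^Suc k)" by (simp add: power_mult[symmetric] mult.commute)
  finally show ?case .
qed

lemma frob_sum: "(\<Sum>i\<in>A. f i :: 'a)^2 = (\<Sum>i\<in>A. (f i)^2)"
proof (induction A rule: infinite_finite_induct)
  case (infinite A) then show ?case by simp
next
  case empty then show ?case by simp
next
  case (insert x F) then show ?case by (simp add: frob)
qed

lemma powcard: "(x::'a) ^ (2^n) = x" using pow_card_eq[of x] card by simp

definition tr :: "'a \<Rightarrow> nat \<Rightarrow> 'a" where "tr d m = (\<Sum>i<m. d^(2^i))"

lemma tr_Suc: "tr d (Suc m) = d + (tr d m)^2"
proof -
  have e: "\<And>i. (d^(2^i))^2 = d^(2^Suc i)" by (simp add: power_mult[symmetric] mult.commute)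
  show ?thesis unfolding tr_def frob_sum e by (subst sum.lessThan_Suc_shift) simp
qed

lemma T1: assumes "z*z + z = d" shows "z^(2^m) = z + tr d m"
proof (induction m)
  case 0 then show ?case by (simp add: tr_def)
next
  case (Suc m)
  have "z^(2^Suc m) = (z^(2^m))^2" by (simp add: power_mult[symmetric] mult.commute)
  also have "\<dots> = z^2 + (tr d m)^2" using Suc frob by simp
  also have "\<dots> = z + d + (tr d m)^2"
  proof -
    have "z*z = (z*z + z) + z" by (simp add: xx add.assoc)
    then have h: "z*z = d + z" using assms by simp
    show ?thesis by (simp add: power2_eq_square h add_ac)
  qed
  finally show ?case by (simp add: tr_Suc add.assoc)
qed

lemma T1n: assumes "z*z + z = d" shows "tr d n = 0"
  using T1[OF assms, of n] powcard[of z] by (metis add_cancel_left_right)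

lemma tr_add: assumes "d^(2^k) = d" shows "tr d (k + m) = tr d k + tr d m"
proof (induction m)
  case 0 then show ?case by (simp add: tr_def)
next
  case (Suc m)
  have "d^(2^(k+m)) = (d^(2^k))^(2^m)" by (simp add: power_add power_mult)
  then have "d^(2^(k+m)) = d^(2^m)" using assms by simp
  then show ?case using Suc by (simp add: tr_def add.assoc)
qed

lemma tr_mult: assumes "d^(2^k) = d" shows "tr d (j * k) = of_nat j * tr d k"
proof (induction j)
  case 0 then show ?case by (simp add: tr_def)
next
  case (Suc j)
  have "tr d (Suc j * k) = tr d (k + j * k)" by simp
  also have "\<dots> = tr d k + tr d (j*k)" by (rule tr_add[OF assms])
  finally show ?case using Suc by (simp add: algebra_simps)
qed

lemma of_nat_c2: "(of_nat j :: 'a) = (if even j then 0 else 1)"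
proof (induction j)
  case 0 then show ?case by simp
next
  case (Suc j) then show ?case by (auto simp: xx)
qed

end

context ctx begin

lemma deg_sum_monom: "degree (\<Sum>i<m. monom (1::'a) (2^i)) \<le> 2^(m-1)"
proof (rule degree_sum_le, simp)
  fix i assume "i \<in> {..<m}"
  then have "i \<le> m - 1" by auto
  then have "(2::nat)^i \<le> 2^(m-1)" by (rule power_increasing) simp
  then show "degree (monom (1::'a) (2^i)) \<le> 2^(m-1)" using degree_monom_le order_trans by blast
qed

lemma tr_roots_card: "card {d. tr d n = 0} \<le> 2^(n-1)"
proof -
  define P where "P = (\<Sum>i<n. monom (1::'a) (2^i))"
  have pe: "poly P x = tr x n" for x by (simp add: P_def tr_def poly_sum poly_monom)
  have nn: "n = Suc (n-1)" using n4 by simp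
  have "P = monom 1 (2^(n-1)) + (\<Sum>i<n-1. monom (1::'a) (2^i))"
    unfolding P_def by (subst nn) (simp add: add.commute)
  moreover have "degree (\<Sum>i<n-1. monom (1::'a) (2^i)) < 2^(n-1)"
  proof -
    have "degree (\<Sum>i<n-1. monom (1::'a) (2^i)) \<le> 2^(n-1-1)" by (rule deg_sum_monom)
    also have "(2::nat)^(n-1-1) < 2^(n-1)" using n4 by simp
    finally show ?thesis .
  qed
  ultimately have dP: "degree P = 2^(n-1)"
    by (simp add: degree_add_eq_left degree_monom_eq)
  then have "P \<noteq> 0" using n4 by (metis degree_0 power_not_zero zero_neq_numeral)
  then have "card {x. poly P x = 0} \<le> degree P" by (rule card_poly_roots_bound)
  then show ?thesis using pe dP by simp
qed

lemma add_eq0: "(x::'a) + y = 0 \<longleftrightarrow> x = y"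
  by (metis xx xxy add.commute add_0)

lemma fiber: "{w. w*w + w = z*z + z} = {z::'a, z+1}"
proof -
  have "w*w + w = z*z + z \<longleftrightarrow> (w + z) * (w + z + 1) = (0::'a)" for w
  proof -
    have "(w + z) * (w + z + 1) = (w*w + w) + (z*z + z)" by (simp add: nz)
    then show ?thesis by (simp add: add_eq0)
  qed
  moreover have "(w + z) * (w + z + 1) = (0::'a) \<longleftrightarrow> w = z \<or> w = z + 1" for w
  proof -
    have "w + z + 1 = 0 \<longleftrightarrow> w = z + 1" by (metis add_eq0 add.assoc)
    then show ?thesis by (simp add: add_eq0)
  qed
  ultimately show ?thesis by auto
qed

lemma image_card: "2 * card (range (\<lambda>z::'a. z*z+z)) = 2^n"
proof -
  let ?f = "\<lambda>z::'a. z*z+z"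
  have U: "(UNIV::'a set) = (\<Union>d\<in>range ?f. ?f -` {d})" by auto
  have "card (UNIV::'a set) = (\<Sum>d\<in>range ?f. card (?f -` {d}))"
    by (subst U, rule card_UN_disjoint) auto
  also have "\<dots> = (\<Sum>d\<in>range ?f. 2)"
  proof (rule sum.cong)
    fix d assume "d \<in> range ?f"
    then obtain z where z: "d = ?f z" by auto
    have "?f -` {d} = {z, z+1}" using fiber[of z] z by auto
    moreover have "z \<noteq> z + 1" by simp
    ultimately show "card (?f -` {d}) = 2" by simp
  qed simp
  finally show ?thesis using card by simp
qed

lemma T2: assumes "tr d n = 0" shows "\<exists>z. z*z + z = d"
proof -
  let ?f = "\<lambda>z::'a. z*z+z"
  have sub: "range ?f \<subseteq> {d. tr d n = 0}" using T1n by auto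
  have "card (range ?f) = 2^(n-1)"
  proof -
    have "(2::nat)^n = 2 * 2^(n-1)" using n4 by (metis Suc_diff_le le_trans one_le_numeral power_Suc diff_Suc_1 numeral_le_iff semiring_norm(69) zero_less_numeral less_imp_le_nat) 
    then show ?thesis using image_card by simp
  qed
  then have "card {d. tr d n = 0} \<le> card (range ?f)" using tr_roots_card by simp
  then have "range ?f = {d. tr d n = 0}" using sub by (intro card_seteq) auto
  then have "d \<in> range ?f" using assms by simp
  then show ?thesis by auto
qed

end

context ctx begin

lemma g0: "g \<noteq> 0" using gg by auto
lemma g1: "g \<noteq> 1" using gg two by auto
lemma gg1: "g \<noteq> g + 1" by simp
lemma ginv: "inverse g = g + 1"
proof -
  have "g * (g + 1) = 1" by (simp add: nz)
  then show ?thesis by (metis inverse_unique)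
qed
lemma g3: "g*g*g = 1" by (simp add: nz)

definition F :: "'a \<Rightarrow> 'a" where "F x = inverse (cyc3 g x)"
definition E :: "'a \<Rightarrow> 'a \<Rightarrow> 'a \<Rightarrow> bool" where "E a b x \<longleftrightarrow> F (x + a) + g * F x = b"

lemma F0: "F 0 = 1" by (simp add: F_def cyc3_def)
lemma F1: "F 1 = g + 1" using g0 g1 by (simp add: F_def cyc3_def ginv)
lemma Fg: "F g = 0" using g0 g1 by (simp add: F_def cyc3_def)
lemma Fo: "x \<noteq> 0 \<Longrightarrow> x \<noteq> 1 \<Longrightarrow> x \<noteq> g \<Longrightarrow> F x = inverse x" by (simp add: F_def cyc3_def)

lemma inv_eq: "d \<noteq> 0 \<Longrightarrow> (b = N * inverse d) \<longleftrightarrow> (b * d = (N::'a))"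
  by (auto simp: field_simps)

lemma ne_add: "(x::'a) + y \<noteq> z \<longleftrightarrow> x \<noteq> z + y"
  by (metis add_eq0 add.assoc add.commute)


lemma nf_facts:
  assumes "a \<noteq> 0" "a \<noteq> 1" "a \<noteq> g" "a \<noteq> g+1"
  shows "a + 1 \<noteq> 0" "a + 1 \<noteq> 1" "a + 1 \<noteq> g" "a + g \<noteq> 0" "a + g \<noteq> 1" "a + g \<noteq> g"
  using assms by (auto simp: ne_add add_ac)

lemma val_aux: "d \<noteq> 0 \<Longrightarrow> inverse d * x + y = (x + y * d) * inverse (d::'a)"
  by (simp add: field_simps)

lemma Ev:
  assumes nf: "a \<noteq> 0" "a \<noteq> 1" "a \<noteq> g" "a \<noteq> g+1"
  shows "E a b 0 \<longleftrightarrow> b*a = 1 + g*a"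
    "E a b 1 \<longleftrightarrow> b*(a+1) = a"
    "E a b g \<longleftrightarrow> b*(a+g) = 1"
    "E a b a \<longleftrightarrow> b*a = a + g"
    "E a b (a+1) \<longleftrightarrow> b*(a+1) = (g+1)*a + 1"
    "E a b (a+g) \<longleftrightarrow> b*(a+g) = g"
proof -
  note f = nf_facts[OF nf]
  have Fa: "F a = inverse a" using nf by (simp add: Fo)
  have Fa1: "F (a+1) = inverse (a+1)" using f by (simp add: Fo)
  have Fag: "F (a+g) = inverse (a+g)" using f by (simp add: Fo)
  have s1: "0 + a = a" "1 + a = a + 1" "g + a = a + g" "a + a = 0" "a + 1 + a = 1" "a + g + a = g" by (simp_all add: nz)
  have g11: "g * (g + 1) = 1" by (simp add: nz)
  have e: "E a b x \<longleftrightarrow> b = F (x + a) + g * F x" for x unfolding E_def by auto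
  have v: "F (0 + a) + g * F 0 = (1 + g*a) * inverse a" unfolding s1 Fa F0 using val_aux[OF nf(1), of 1 g] by simp
  show "E a b 0 \<longleftrightarrow> b*a = 1 + g*a" unfolding e v by (rule inv_eq[OF nf(1)])
  have "F (1 + a) + g * F 1 = (1 + 1*(a+1)) * inverse (a+1)" unfolding s1 Fa1 F1 g11 using val_aux[OF f(1), of 1 1] by simp
  moreover have "1 + 1*(a+1) = a" by (simp add: nz)
  ultimately have v: "F (1 + a) + g * F 1 = a * inverse (a+1)" by simp
  show "E a b 1 \<longleftrightarrow> b*(a+1) = a" unfolding e v by (rule inv_eq[OF f(1)])
  have v: "F (g + a) + g * F g = 1 * inverse (a+g)" unfolding s1 Fag Fg by simp
  show "E a b g \<longleftrightarrow> b*(a+g) = 1" unfolding e v by (rule inv_eq[OF f(4)])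
  have "F (a + a) + g * F a = (a + g) * inverse a" unfolding s1 Fa F0 using val_aux[OF nf(1), of g 1] nf(1)
    by (simp add: field_simps)
  then have v: "F (a + a) + g * F a = (a + g) * inverse a" .
  show "E a b a \<longleftrightarrow> b*a = a + g" unfolding e v by (rule inv_eq[OF nf(1)])
  have "F (a + 1 + a) + g * F (a+1) = ((g+1)*a + 1) * inverse (a+1)"
  proof -
    have "F (a + 1 + a) + g * F (a+1) = inverse (a+1) * g + (g+1)" unfolding s1 Fa1 F1 by (simp add: mult.commute add.commute)
    also have "\<dots> = (g + (g+1)*(a+1)) * inverse (a+1)" by (rule val_aux[OF f(1)])
    also have "g + (g+1)*(a+1) = (g+1)*a + 1" by (simp add: nz)
    finally show ?thesis .
  qed
  then have v: "F (a + 1 + a) + g * F (a+1) = ((g+1)*a + 1) * inverse (a+1)" .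
  show "E a b (a+1) \<longleftrightarrow> b*(a+1) = (g+1)*a + 1" unfolding e v by (rule inv_eq[OF f(1)])
  have v: "F (a + g + a) + g * F (a+g) = g * inverse (a+g)" unfolding s1 Fag Fg by simp
  show "E a b (a+g) \<longleftrightarrow> b*(a+g) = g" unfolding e v by (rule inv_eq[OF f(4)])
qed

lemma gp1: "g + 1 \<noteq> 0" using g1 by (simp add: add_eq0)

definition q1 :: "'a \<Rightarrow> bool" where "q1 a \<longleftrightarrow> a*a = a + g"
definition q2 :: "'a \<Rightarrow> bool" where "q2 a \<longleftrightarrow> a*a = a + g + 1"
definition q3 :: "'a \<Rightarrow> bool" where "q3 a \<longleftrightarrow> a*a = g*a + a + 1"
definition q4 :: "'a \<Rightarrow> bool" where "q4 a \<longleftrightarrow> a*a = g*a + 1"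

lemma pair_0_1:
  assumes nf: "a \<noteq> 0" "a \<noteq> 1" "a \<noteq> g" "a \<noteq> g+1" and hi: "E a b (0)" and hj: "E a b (1)"
  shows "q1 a"
proof -
  have h1: "b*a = 1 + g*a" using hi Ev(1)[OF nf] by simp
  have h2: "b*(a+1) = a" using hj Ev(2)[OF nf] by simp
  have "(1 + g*a)*(a+1) = (b*a)*(a+1)" by (simp only: h1)
  also have "\<dots> = (b*(a+1))*a" by (simp only: ac_simps)
  also have "\<dots> = (a)*a" by (simp only: h2)
  finally have P: "(1 + g*a)*(a+1) + (a)*a = 0" by (simp only: add_eq0)
  have eq: "a*a + (a + g) = g * ((1 + g*a)*(a+1) + (a)*a)" by (simp add: nz)
  have "a*a + (a + g) = 0" unfolding eq P by (rule mult_zero_right)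
  then show ?thesis unfolding q1_def by (simp only: add_eq0)
qed

lemma pair_0_2:
  assumes nf: "a \<noteq> 0" "a \<noteq> 1" "a \<noteq> g" "a \<noteq> g+1" and hi: "E a b (0)" and hj: "E a b (g)"
  shows "q4 a"
proof -
  have h1: "b*a = 1 + g*a" using hi Ev(1)[OF nf] by simp
  have h2: "b*(a+g) = 1" using hj Ev(3)[OF nf] by simp
  have "(1 + g*a)*(a+g) = (b*a)*(a+g)" by (simp only: h1)
  also have "\<dots> = (b*(a+g))*a" by (simp only: ac_simps)
  also have "\<dots> = (1)*a" by (simp only: h2)
  finally have P: "(1 + g*a)*(a+g) + (1)*a = 0" by (simp only: add_eq0)
  have eq: "a*a + (g*a + 1) = (g+1) * ((1 + g*a)*(a+g) + (1)*a)" by (simp add: nz)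
  have "a*a + (g*a + 1) = 0" unfolding eq P by (rule mult_zero_right)
  then show ?thesis unfolding q4_def by (simp only: add_eq0)
qed

lemma pair_0_3:
  assumes nf: "a \<noteq> 0" "a \<noteq> 1" "a \<noteq> g" "a \<noteq> g+1" and hi: "E a b (0)" and hj: "E a b (a)"
  shows False
proof -
  have h1: "b*a = 1 + g*a" using hi Ev(1)[OF nf] by simp
  have h2: "b*a = a + g" using hj Ev(4)[OF nf] by simp
  have "(1 + g*a)*a = (b*a)*a" by (simp only: h1)
  also have "\<dots> = (a + g)*a" by (simp only: h2)
  finally have P: "(1 + g*a)*a + (a + g)*a = 0" by (simp only: add_eq0)
  have eq: "(1 + g*a)*a + (a + g)*a = (g+1) * ((a + 0) * (a + 1))" by (simp add: nz)
  have "(g+1) * ((a + 0) * (a + 1)) = 0" using P unfolding eq .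
  then have "(a + 0) * (a + 1) = 0" using g0 gp1 by simp
  then show False using nf by (auto simp: add_eq0)
qed

lemma pair_0_4:
  assumes nf: "a \<noteq> 0" "a \<noteq> 1" "a \<noteq> g" "a \<noteq> g+1" and hi: "E a b (0)" and hj: "E a b (a+1)"
  shows "q4 a"
proof -
  have h1: "b*a = 1 + g*a" using hi Ev(1)[OF nf] by simp
  have h2: "b*(a+1) = (g+1)*a + 1" using hj Ev(5)[OF nf] by simp
  have "(1 + g*a)*(a+1) = (b*a)*(a+1)" by (simp only: h1)
  also have "\<dots> = (b*(a+1))*a" by (simp only: ac_simps)
  also have "\<dots> = ((g+1)*a + 1)*a" by (simp only: h2)
  finally have P: "(1 + g*a)*(a+1) + ((g+1)*a + 1)*a = 0" by (simp only: add_eq0)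
  have eq: "a*a + (g*a + 1) = 1 * ((1 + g*a)*(a+1) + ((g+1)*a + 1)*a)" by (simp add: nz)
  have "a*a + (g*a + 1) = 0" unfolding eq P by (rule mult_zero_right)
  then show ?thesis unfolding q4_def by (simp only: add_eq0)
qed

lemma pair_0_5:
  assumes nf: "a \<noteq> 0" "a \<noteq> 1" "a \<noteq> g" "a \<noteq> g+1" and hi: "E a b (0)" and hj: "E a b (a+g)"
  shows False
proof -
  have h1: "b*a = 1 + g*a" using hi Ev(1)[OF nf] by simp
  have h2: "b*(a+g) = g" using hj Ev(6)[OF nf] by simp
  have "(1 + g*a)*(a+g) = (b*a)*(a+g)" by (simp only: h1)
  also have "\<dots> = (b*(a+g))*a" by (simp only: ac_simps)
  also have "\<dots> = (g)*a" by (simp only: h2)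
  finally have P: "(1 + g*a)*(a+g) + (g)*a = 0" by (simp only: add_eq0)
  have eq: "(1 + g*a)*(a+g) + (g)*a = g * ((a + 1) * (a + 1))" by (simp add: nz)
  have "g * ((a + 1) * (a + 1)) = 0" using P unfolding eq .
  then have "(a + 1) * (a + 1) = 0" using g0 gp1 by simp
  then show False using nf by (auto simp: add_eq0)
qed

lemma pair_1_2:
  assumes nf: "a \<noteq> 0" "a \<noteq> 1" "a \<noteq> g" "a \<noteq> g+1" and hi: "E a b (1)" and hj: "E a b (g)"
  shows "q3 a"
proof -
  have h1: "b*(a+1) = a" using hi Ev(2)[OF nf] by simp
  have h2: "b*(a+g) = 1" using hj Ev(3)[OF nf] by simp
  have "(a)*(a+g) = (b*(a+1))*(a+g)" by (simp only: h1)
  also have "\<dots> = (b*(a+g))*(a+1)" by (simp only: ac_simps)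
  also have "\<dots> = (1)*(a+1)" by (simp only: h2)
  finally have P: "(a)*(a+g) + (1)*(a+1) = 0" by (simp only: add_eq0)
  have eq: "a*a + (g*a + a + 1) = 1 * ((a)*(a+g) + (1)*(a+1))" by (simp add: nz)
  have "a*a + (g*a + a + 1) = 0" unfolding eq P by (rule mult_zero_right)
  then show ?thesis unfolding q3_def by (simp only: add_eq0)
qed

lemma pair_1_3:
  assumes nf: "a \<noteq> 0" "a \<noteq> 1" "a \<noteq> g" "a \<noteq> g+1" and hi: "E a b (1)" and hj: "E a b (a)"
  shows False
proof -
  have h1: "b*(a+1) = a" using hi Ev(2)[OF nf] by simp
  have h2: "b*a = a + g" using hj Ev(4)[OF nf] by simp
  have "(a)*a = (b*(a+1))*a" by (simp only: h1)
  also have "\<dots> = (b*a)*(a+1)" by (simp only: ac_simps)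
  also have "\<dots> = (a + g)*(a+1)" by (simp only: h2)
  finally have P: "(a)*a + (a + g)*(a+1) = 0" by (simp only: add_eq0)
  have eq: "(a)*a + (a + g)*(a+1) = (g+1) * ((a + (g+1)))" by (simp add: nz)
  have "(g+1) * ((a + (g+1))) = 0" using P unfolding eq .
  then have "(a + (g+1)) = 0" using g0 gp1 by simp
  then show False using nf by (auto simp: add_eq0)
qed

lemma pair_1_4:
  assumes nf: "a \<noteq> 0" "a \<noteq> 1" "a \<noteq> g" "a \<noteq> g+1" and hi: "E a b (1)" and hj: "E a b (a+1)"
  shows False
proof -
  have h1: "b*(a+1) = a" using hi Ev(2)[OF nf] by simp
  have h2: "b*(a+1) = (g+1)*a + 1" using hj Ev(5)[OF nf] by simp
  have "(a)*(a+1) = (b*(a+1))*(a+1)" by (simp only: h1)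
  also have "\<dots> = ((g+1)*a + 1)*(a+1)" by (simp only: h2)
  finally have P: "(a)*(a+1) + ((g+1)*a + 1)*(a+1) = 0" by (simp only: add_eq0)
  have eq: "(a)*(a+1) + ((g+1)*a + 1)*(a+1) = g * ((a + 1) * (a + (g+1)))" by (simp add: nz)
  have "g * ((a + 1) * (a + (g+1))) = 0" using P unfolding eq .
  then have "(a + 1) * (a + (g+1)) = 0" using g0 gp1 by simp
  then show False using nf by (auto simp: add_eq0)
qed

lemma pair_1_5:
  assumes nf: "a \<noteq> 0" "a \<noteq> 1" "a \<noteq> g" "a \<noteq> g+1" and hi: "E a b (1)" and hj: "E a b (a+g)"
  shows False
proof -
  have h1: "b*(a+1) = a" using hi Ev(2)[OF nf] by simp
  have h2: "b*(a+g) = g" using hj Ev(6)[OF nf] by simp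
  have "(a)*(a+g) = (b*(a+1))*(a+g)" by (simp only: h1)
  also have "\<dots> = (b*(a+g))*(a+1)" by (simp only: ac_simps)
  also have "\<dots> = (g)*(a+1)" by (simp only: h2)
  finally have P: "(a)*(a+g) + (g)*(a+1) = 0" by (simp only: add_eq0)
  have eq: "(a)*(a+g) + (g)*(a+1) = 1 * ((a + (g+1)) * (a + (g+1)))" by (simp add: nz)
  have "1 * ((a + (g+1)) * (a + (g+1))) = 0" using P unfolding eq .
  then have "(a + (g+1)) * (a + (g+1)) = 0" using g0 gp1 by simp
  then show False using nf by (auto simp: add_eq0)
qed

lemma pair_2_3:
  assumes nf: "a \<noteq> 0" "a \<noteq> 1" "a \<noteq> g" "a \<noteq> g+1" and hi: "E a b (g)" and hj: "E a b (a)"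
  shows "q2 a"
proof -
  have h1: "b*(a+g) = 1" using hi Ev(3)[OF nf] by simp
  have h2: "b*a = a + g" using hj Ev(4)[OF nf] by simp
  have "(1)*a = (b*(a+g))*a" by (simp only: h1)
  also have "\<dots> = (b*a)*(a+g)" by (simp only: ac_simps)
  also have "\<dots> = (a + g)*(a+g)" by (simp only: h2)
  finally have P: "(1)*a + (a + g)*(a+g) = 0" by (simp only: add_eq0)
  have eq: "a*a + (a + g + 1) = 1 * ((1)*a + (a + g)*(a+g))" by (simp add: nz)
  have "a*a + (a + g + 1) = 0" unfolding eq P by (rule mult_zero_right)
  then show ?thesis unfolding q2_def by (simp only: add_eq0)
qed

lemma pair_2_4:
  assumes nf: "a \<noteq> 0" "a \<noteq> 1" "a \<noteq> g" "a \<noteq> g+1" and hi: "E a b (g)" and hj: "E a b (a+1)"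
  shows "q4 a"
proof -
  have h1: "b*(a+g) = 1" using hi Ev(3)[OF nf] by simp
  have h2: "b*(a+1) = (g+1)*a + 1" using hj Ev(5)[OF nf] by simp
  have "(1)*(a+1) = (b*(a+g))*(a+1)" by (simp only: h1)
  also have "\<dots> = (b*(a+1))*(a+g)" by (simp only: ac_simps)
  also have "\<dots> = ((g+1)*a + 1)*(a+g)" by (simp only: h2)
  finally have P: "(1)*(a+1) + ((g+1)*a + 1)*(a+g) = 0" by (simp only: add_eq0)
  have eq: "a*a + (g*a + 1) = g * ((1)*(a+1) + ((g+1)*a + 1)*(a+g))" by (simp add: nz)
  have "a*a + (g*a + 1) = 0" unfolding eq P by (rule mult_zero_right)
  then show ?thesis unfolding q4_def by (simp only: add_eq0)
qed

lemma pair_2_5: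
  assumes nf: "a \<noteq> 0" "a \<noteq> 1" "a \<noteq> g" "a \<noteq> g+1" and hi: "E a b (g)" and hj: "E a b (a+g)"
  shows False
proof -
  have h1: "b*(a+g) = 1" using hi Ev(3)[OF nf] by simp
  have h2: "b*(a+g) = g" using hj Ev(6)[OF nf] by simp
  have "(1)*(a+g) = (b*(a+g))*(a+g)" by (simp only: h1)
  also have "\<dots> = (g)*(a+g)" by (simp only: h2)
  finally have P: "(1)*(a+g) + (g)*(a+g) = 0" by (simp only: add_eq0)
  have eq: "(1)*(a+g) + (g)*(a+g) = (g+1) * ((a + g))" by (simp add: nz)
  have "(g+1) * ((a + g)) = 0" using P unfolding eq .
  then have "(a + g) = 0" using g0 gp1 by simp
  then show False using nf by (auto simp: add_eq0)
qed

lemma pair_3_4: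
  assumes nf: "a \<noteq> 0" "a \<noteq> 1" "a \<noteq> g" "a \<noteq> g+1" and hi: "E a b (a)" and hj: "E a b (a+1)"
  shows False
proof -
  have h1: "b*a = a + g" using hi Ev(4)[OF nf] by simp
  have h2: "b*(a+1) = (g+1)*a + 1" using hj Ev(5)[OF nf] by simp
  have "(a + g)*(a+1) = (b*a)*(a+1)" by (simp only: h1)
  also have "\<dots> = (b*(a+1))*a" by (simp only: ac_simps)
  also have "\<dots> = ((g+1)*a + 1)*a" by (simp only: h2)
  finally have P: "(a + g)*(a+1) + ((g+1)*a + 1)*a = 0" by (simp only: add_eq0)
  have eq: "(a + g)*(a+1) + ((g+1)*a + 1)*a = g * ((a + g) * (a + (g+1)))" by (simp add: nz)
  have "g * ((a + g) * (a + (g+1))) = 0" using P unfolding eq .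
  then have "(a + g) * (a + (g+1)) = 0" using g0 gp1 by simp
  then show False using nf by (auto simp: add_eq0)
qed

lemma pair_3_5:
  assumes nf: "a \<noteq> 0" "a \<noteq> 1" "a \<noteq> g" "a \<noteq> g+1" and hi: "E a b (a)" and hj: "E a b (a+g)"
  shows False
proof -
  have h1: "b*a = a + g" using hi Ev(4)[OF nf] by simp
  have h2: "b*(a+g) = g" using hj Ev(6)[OF nf] by simp
  have "(a + g)*(a+g) = (b*a)*(a+g)" by (simp only: h1)
  also have "\<dots> = (b*(a+g))*a" by (simp only: ac_simps)
  also have "\<dots> = (g)*a" by (simp only: h2)
  finally have P: "(a + g)*(a+g) + (g)*a = 0" by (simp only: add_eq0)
  have eq: "(a + g)*(a+g) + (g)*a = 1 * ((a + 1) * (a + (g+1)))" by (simp add: nz)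
  have "1 * ((a + 1) * (a + (g+1))) = 0" using P unfolding eq .
  then have "(a + 1) * (a + (g+1)) = 0" using g0 gp1 by simp
  then show False using nf by (auto simp: add_eq0)
qed

lemma pair_4_5:
  assumes nf: "a \<noteq> 0" "a \<noteq> 1" "a \<noteq> g" "a \<noteq> g+1" and hi: "E a b (a+1)" and hj: "E a b (a+g)"
  shows False
proof -
  have h1: "b*(a+1) = (g+1)*a + 1" using hi Ev(5)[OF nf] by simp
  have h2: "b*(a+g) = g" using hj Ev(6)[OF nf] by simp
  have "((g+1)*a + 1)*(a+g) = (b*(a+1))*(a+g)" by (simp only: h1)
  also have "\<dots> = (b*(a+g))*(a+1)" by (simp only: ac_simps)
  also have "\<dots> = (g)*(a+1)" by (simp only: h2)
  finally have P: "((g+1)*a + 1)*(a+g) + (g)*(a+1) = 0" by (simp only: add_eq0)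
  have eq: "((g+1)*a + 1)*(a+g) + (g)*(a+1) = (g+1) * ((a + 0) * (a + (g+1)))" by (simp add: nz)
  have "(g+1) * ((a + 0) * (a + (g+1))) = 0" using P unfolding eq .
  then have "(a + 0) * (a + (g+1)) = 0" using g0 gp1 by simp
  then show False using nf by (auto simp: add_eq0)
qed

end

context ctx begin

lemma excl:
  assumes nf: "a \<noteq> 0" "a \<noteq> 1" "a \<noteq> g" "a \<noteq> g+1"
  shows "\<not> (q1 a \<and> q2 a)" "\<not> (q1 a \<and> q3 a)" "\<not> (q1 a \<and> q4 a)"
        "\<not> (q2 a \<and> q3 a)" "\<not> (q2 a \<and> q4 a)" "\<not> (q3 a \<and> q4 a)"
proof -
  have gen: "\<And>R S X. R = S \<Longrightarrow> R + S = X \<Longrightarrow> X = (0::'a)"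
    by (metis xx)
  show "\<not> (q1 a \<and> q2 a)"
  proof
    assume h: "q1 a \<and> q2 a"
    have "a+g = a+g+1" using h unfolding q1_def q2_def by metis
    then show False by (metis add_cancel_left_right one_neq_zero)
  qed
  show "\<not> (q1 a \<and> q3 a)"
  proof
    assume h: "q1 a \<and> q3 a"
    have "g * (a + g) = 0" proof (rule gen[of "a+g" "g*a+a+1"])
      show "a+g = g*a+a+1" using h unfolding q1_def q3_def by metis
    qed (simp add: nz)
    then show False using nf g0 g1 gp1 by (simp add: add_eq0)
  qed
  show "\<not> (q1 a \<and> q4 a)"
  proof
    assume h: "q1 a \<and> q4 a"
    have "(g+1) * (a + 1) = 0" proof (rule gen[of "a+g" "g*a+1"])
      show "a+g = g*a+1" using h unfolding q1_def q4_def by metis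
    qed (simp add: nz)
    then show False using nf g0 g1 gp1 by (simp add: add_eq0)
  qed
  show "\<not> (q2 a \<and> q3 a)"
  proof
    assume h: "q2 a \<and> q3 a"
    have "g * (a + 1) = 0" proof (rule gen[of "a+g+1" "g*a+a+1"])
      show "a+g+1 = g*a+a+1" using h unfolding q2_def q3_def by metis
    qed (simp add: nz)
    then show False using nf g0 g1 gp1 by (simp add: add_eq0)
  qed
  show "\<not> (q2 a \<and> q4 a)"
  proof
    assume h: "q2 a \<and> q4 a"
    have "(g+1) * (a + (g+1)) = 0" proof (rule gen[of "a+g+1" "g*a+1"])
      show "a+g+1 = g*a+1" using h unfolding q2_def q4_def by metis
    qed (simp add: nz)
    then show False using nf g0 g1 gp1 by (simp add: add_eq0)
  qed
  show "\<not> (q3 a \<and> q4 a)"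
  proof
    assume h: "q3 a \<and> q4 a"
    have "a = 0" proof (rule gen[of "g*a+a+1" "g*a+1"])
      show "g*a+a+1 = g*a+1" using h unfolding q3_def q4_def by metis
    qed (simp add: nz)
    then show False using nf by simp
  qed
qed

definition TT :: "'a \<Rightarrow> 'a set" where "TT a = {0, 1, g, a, a+1, a+g}"

lemma pairs_lemma:
  assumes nf: "a \<noteq> 0" "a \<noteq> 1" "a \<noteq> g" "a \<noteq> g+1"
    and x: "x \<in> TT a" and y: "y \<in> TT a" and xy: "x \<noteq> y" and ex: "E a b x" and ey: "E a b y"
  shows "(q1 a \<and> x \<in> {0,1}) \<or> (q2 a \<and> x \<in> {g,a}) \<or> (q3 a \<and> x \<in> {1,g}) \<or> (q4 a \<and> x \<in> {0,g,a+1})"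
proof -
  note P = pair_0_1[OF nf] pair_0_2[OF nf] pair_0_3[OF nf] pair_0_4[OF nf] pair_0_5[OF nf]
    pair_1_2[OF nf] pair_1_3[OF nf] pair_1_4[OF nf] pair_1_5[OF nf]
    pair_2_3[OF nf] pair_2_4[OF nf] pair_2_5[OF nf]
    pair_3_4[OF nf] pair_3_5[OF nf] pair_4_5[OF nf]
  from x y xy ex ey show ?thesis unfolding TT_def
    by (auto dest: P)
qed

lemma ST_struct:
  assumes nf: "a \<noteq> 0" "a \<noteq> 1" "a \<noteq> g" "a \<noteq> g+1"
    and c2: "card {x \<in> TT a. E a b x} \<ge> 2"
  shows "(q1 a \<and> {x \<in> TT a. E a b x} \<subseteq> {0,1}) \<or> (q2 a \<and> {x \<in> TT a. E a b x} \<subseteq> {g,a})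
       \<or> (q3 a \<and> {x \<in> TT a. E a b x} \<subseteq> {1,g}) \<or> (q4 a \<and> {x \<in> TT a. E a b x} \<subseteq> {0,g,a+1})"
proof -
  let ?S = "{x \<in> TT a. E a b x}"
  have fin: "finite ?S" by simp
  have "\<not> card ?S \<le> Suc 0" using c2 by simp
  then obtain x0 y0 where x0: "x0 \<in> ?S" and y0: "y0 \<in> ?S" and ne: "x0 \<noteq> y0"
    using card_le_Suc0_iff_eq[OF fin] by blast
  have key: "(q1 a \<and> x \<in> {0,1}) \<or> (q2 a \<and> x \<in> {g,a}) \<or> (q3 a \<and> x \<in> {1,g}) \<or> (q4 a \<and> x \<in> {0,g,a+1})"
    if x: "x \<in> ?S" for x
  proof -
    have xt: "x \<in> TT a" "E a b x" using x by auto
    have x0t: "x0 \<in> TT a" "E a b x0" using x0 by auto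
    have y0t: "y0 \<in> TT a" "E a b y0" using y0 by auto
    show ?thesis
    proof (cases "x = x0")
      case True
      then have "x \<noteq> y0" using ne by simp
      from pairs_lemma[OF nf xt(1) y0t(1) this xt(2) y0t(2)] show ?thesis .
    next
      case False
      from pairs_lemma[OF nf xt(1) x0t(1) this xt(2) x0t(2)] show ?thesis .
    qed
  qed
  note ex = excl[OF nf]
  show ?thesis
  proof -
    consider "q1 a" | "q2 a" | "q3 a" | "q4 a" using key[OF x0] by blast
    then show ?thesis
    proof cases
      case 1 have "?S \<subseteq> {0,1}"
      proof
        fix x assume "x \<in> ?S"
        from key[OF this] ex 1 show "x \<in> {0,1}" by blast
      qed
      then show ?thesis using 1 by blast
    next
      case 2 have "?S \<subseteq> {g,a}"
      proof
        fix x assume "x \<in> ?S"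
        from key[OF this] ex 2 show "x \<in> {g,a}" by blast
      qed
      then show ?thesis using 2 by blast
    next
      case 3 have "?S \<subseteq> {1,g}"
      proof
        fix x assume "x \<in> ?S"
        from key[OF this] ex 3 show "x \<in> {1,g}" by blast
      qed
      then show ?thesis using 3 by blast
    next
      case 4 have "?S \<subseteq> {0,g,a+1}"
      proof
        fix x assume "x \<in> ?S"
        from key[OF this] ex 4 show "x \<in> {0,g,a+1}" by blast
      qed
      then show ?thesis using 4 by blast
    qed
  qed
qed

lemma ST_card:
  assumes nf: "a \<noteq> 0" "a \<noteq> 1" "a \<noteq> g" "a \<noteq> g+1"
  shows "card {x \<in> TT a. E a b x} \<le> 3"
    and "card {x \<in> TT a. E a b x} \<ge> 2 \<Longrightarrow> q1 a \<or> q2 a \<or> q3 a \<or> q4 a"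
    and "card {x \<in> TT a. E a b x} \<ge> 3 \<Longrightarrow> q4 a \<and> E a b 0"
proof -
  let ?S = "{x \<in> TT a. E a b x}"
  have c1: "card {0,1::'a} \<le> 2" "card {g,a} \<le> 2" "card {1,g} \<le> 2" "card {0,g,a+1} \<le> 3"
    by (simp_all add: card_insert_le_m1)
  have s1: "?S \<subseteq> {0,1} \<Longrightarrow> card ?S \<le> 2" using c1(1) card_mono[of "{0,1}" ?S] by simp
  have s2: "?S \<subseteq> {g,a} \<Longrightarrow> card ?S \<le> 2" using c1(2) card_mono[of "{g,a}" ?S] by simp
  have s3: "?S \<subseteq> {1,g} \<Longrightarrow> card ?S \<le> 2" using c1(3) card_mono[of "{1,g}" ?S] by simp
  have s4: "?S \<subseteq> {0,g,a+1} \<Longrightarrow> card ?S \<le> 3" using c1(4) card_mono[of "{0,g,a+1}" ?S] by simp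
  show "card ?S \<le> 3"
  proof (cases "card ?S \<ge> 2")
    case True
    from ST_struct[OF nf True] s1 s2 s3 s4 show ?thesis by linarith
  qed simp
  show "card ?S \<ge> 2 \<Longrightarrow> q1 a \<or> q2 a \<or> q3 a \<or> q4 a" using ST_struct[OF nf] by blast
  assume c3: "card ?S \<ge> 3"
  then have "card ?S \<ge> 2" by simp
  from ST_struct[OF nf this] s1 s2 s3 c3 have q: "q4 a" and ss: "?S \<subseteq> {0,g,a+1}" by auto
  have "?S = {0,g,a+1}" using ss c3 c1(4) by (intro card_seteq) auto
  then have "0 \<in> ?S" by simp
  then show "q4 a \<and> E a b 0" using q by simp
qed

end

context ctx begin

definition Qp :: "'a \<Rightarrow> 'a \<Rightarrow> 'a \<Rightarrow> 'a" where "Qp a b x = b*x*x + (a*b+1+g)*x + a*g"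

lemma generic:
  assumes a0: "a \<noteq> 0" and xT: "x \<notin> TT a"
  shows "E a b x \<longleftrightarrow> Qp a b x = 0"
proof -
  have x: "x \<noteq> 0" "x \<noteq> 1" "x \<noteq> g" "x \<noteq> a" "x \<noteq> a+1" "x \<noteq> a+g" using xT by (auto simp: TT_def)
  have sw: "\<And>y. x + a = y \<Longrightarrow> x = a + y" by (metis xxy add.commute)
  have xa: "x + a \<noteq> 0" "x + a \<noteq> 1" "x + a \<noteq> g" using x sw by force+
  have d: "x * (x + a) \<noteq> 0" using x xa by simp
  have v: "F (x + a) + g * F x = (x + g*(x+a)) * inverse (x*(x+a))"
    using x xa by (simp add: Fo field_simps)
  have "E a b x \<longleftrightarrow> b * (x*(x+a)) = x + g*(x+a)"
    unfolding E_def using v inv_eq[OF d] by (metis)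
  also have "\<dots> \<longleftrightarrow> b * (x*(x+a)) + (x + g*(x+a)) = 0" by (simp only: add_eq0)
  also have "b * (x*(x+a)) + (x + g*(x+a)) = Qp a b x" unfolding Qp_def by (simp add: nz)
  finally show ?thesis .
qed

lemma Qp_roots:
  assumes a0: "a \<noteq> 0"
  shows "card {x. Qp a b x = 0} \<le> 2"
proof -
  let ?p = "[:a*g, a*b+1+g, b:]"
  have pe: "poly ?p x = Qp a b x" for x unfolding Qp_def by (simp add: algebra_simps)
  have "?p \<noteq> 0" using a0 g0 by simp
  then have "card {x. poly ?p x = 0} \<le> degree ?p" by (rule card_poly_roots_bound)
  also have "degree ?p \<le> 2" by simp
  finally show ?thesis using pe by simp
qed

lemma count_split:
  assumes a0: "a \<noteq> 0"
  shows "card {x. E a b x} \<le> card {x \<in> TT a. E a b x} + card {x. x \<notin> TT a \<and> Qp a b x = 0}"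
proof -
  have "{x. E a b x} = {x \<in> TT a. E a b x} \<union> {x. x \<notin> TT a \<and> Qp a b x = 0}"
    using generic[OF a0] by auto
  then show ?thesis by (simp add: card_Un_le)
qed

lemma count_le:
  assumes a0: "a \<noteq> 0"
  shows "card {x. E a b x} \<le> card {x \<in> TT a. E a b x} + 2"
proof -
  have "card {x. x \<notin> TT a \<and> Qp a b x = 0} \<le> card {x. Qp a b x = 0}" by (rule card_mono) auto
  then show ?thesis using count_split[OF a0, of b] Qp_roots[OF a0, of b] by linarith
qed

lemma Fg1: "F (g+1) = g"
proof -
  have "g + 1 \<noteq> 0" "g + 1 \<noteq> 1" "g + 1 \<noteq> g" using g0 gp1 by (auto simp: add_eq0)
  then have "F (g+1) = inverse (g+1)" by (simp add: Fo)
  moreover have "inverse (g+1) = g" using ginv by (metis inverse_inverse_eq)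
  ultimately show ?thesis by simp
qed

lemma a0_case: "card {x. E 0 b x} \<le> 1"
proof -
  have inj: "inj F" unfolding F_def
  proof (rule injI)
    fix x y assume "inverse (cyc3 g x) = inverse (cyc3 g y)"
    then have "cyc3 g x = cyc3 g y" by simp
    then show "x = y" using g0 g1 unfolding cyc3_def by (auto split: if_splits)
  qed
  have "E 0 b x \<longleftrightarrow> F x = b * inverse (g+1)" for x
  proof -
    have "E 0 b x \<longleftrightarrow> (g+1) * F x = b" unfolding E_def by (simp add: algebra_simps)
    also have "\<dots> \<longleftrightarrow> F x = b * inverse (g+1)" using gp1 by (auto simp: field_simps)
    finally show ?thesis .
  qed
  then have "{x. E 0 b x} = F -` {b * inverse (g+1)}" by auto
  moreover have "card (F -` {b * inverse (g+1)}) \<le> Suc 0"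
    by (subst card_le_Suc0_iff_eq) (use inj in \<open>auto simp: inj_def\<close>)
  ultimately show ?thesis by simp
qed

lemma F4tab: "(0::'a) + 0 = 0"
    "(0::'a) + 1 = 1"
    "(0::'a) + g = g"
    "(0::'a) + (g+1) = (g+1)"
    "(1::'a) + 0 = 1"
    "(1::'a) + 1 = 0"
    "(1::'a) + g = (g+1)"
    "(1::'a) + (g+1) = g"
    "(g::'a) + 0 = g"
    "(g::'a) + g = 0"
    "(g::'a) + (g+1) = 1"
    "((g+1)::'a) + 0 = (g+1)"
    "((g+1)::'a) + 1 = g"
    "((g+1)::'a) + g = 1"
    "((g+1)::'a) + (g+1) = 0"
    "g * 0 = 0"
    "g * 1 = g"
    "g * g = (g+1)"
    "g * (g+1) = 1"
  by (simp_all add: nz)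

lemma F4dist: "(0::'a) \<noteq> 1" "(0::'a) \<noteq> g" "(0::'a) \<noteq> g+1" "(1::'a) \<noteq> g" "(1::'a) \<noteq> g+1" "g \<noteq> g+1"
  "(1::'a) \<noteq> 0" "g \<noteq> 0" "g+1 \<noteq> 0" "g \<noteq> 1" "g+1 \<noteq> 1" "g+1 \<noteq> g"
  using g0 g1 gp1 by (auto simp: add_eq0)

lemma F4_case:
  assumes a: "a = 1 \<or> a = g \<or> a = g+1"
  shows "card {x \<in> TT a. E a b x} \<le> 1"
proof -
  have TT: "TT a = {0,1,g,g+1}" using a unfolding TT_def by (auto simp: F4tab two')
  have "x = y" if x: "x \<in> TT a" and y: "y \<in> TT a" and ex: "E a b x" and ey: "E a b y" for x y
  proof -
    have "F (x + a) + g * F x = F (y + a) + g * F y" using ex ey unfolding E_def by simp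
    then show ?thesis using a x y unfolding TT
      by (auto simp: F4tab F0 F1 Fg Fg1 F4dist two')
  qed
  then have "card {x \<in> TT a. E a b x} \<le> Suc 0"
    by (subst card_le_Suc0_iff_eq) auto
  then show ?thesis by simp
qed

end

context ctx begin

lemma of_nat_tr: assumes "d^(2^2) = d" "tr d 2 = 1" shows "tr d n = (if even (n div 2) then 0 else 1)"
proof -
  have "n = (n div 2) * 2" using ev by simp
  then have "tr d n = of_nat (n div 2) * tr d 2" using tr_mult[OF assms(1), of "n div 2"] by simp
  then show ?thesis using assms(2) of_nat_c2 by simp
qed

lemma g4: "g^(2^2) = g" by (simp add: eval_nat_numeral nz)
lemma g14: "(g+1)^(2^2) = g+1" by (simp add: eval_nat_numeral nz)
lemma trg2: "tr g 2 = 1" by (simp add: tr_def eval_nat_numeral nz)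
lemma trg12: "tr (g+1) 2 = 1" by (simp add: tr_def eval_nat_numeral nz)

lemma trF4:
  shows "n mod 4 = 2 \<Longrightarrow> tr g n = 1 \<and> tr (g+1) n = 1"
    and "n mod 4 = 0 \<Longrightarrow> tr g n = 0 \<and> tr (g+1) n = 0"
proof -
  have e1: "n mod 4 = 2 \<Longrightarrow> odd (n div 2)" by presburger
  have e2: "n mod 4 = 0 \<Longrightarrow> even (n div 2)" by presburger
  show "n mod 4 = 2 \<Longrightarrow> tr g n = 1 \<and> tr (g+1) n = 1"
    using of_nat_tr[OF g4 trg2] of_nat_tr[OF g14 trg12] e1 by simp
  show "n mod 4 = 0 \<Longrightarrow> tr g n = 0 \<and> tr (g+1) n = 0"
    using of_nat_tr[OF g4 trg2] of_nat_tr[OF g14 trg12] e2 by simp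
qed

lemma fam_z:
  shows "q1 a \<Longrightarrow> a*a + a = g"
    and "q2 a \<Longrightarrow> a*a + a = g + 1"
    and "q3 a \<Longrightarrow> (g*a)*(g*a) + g*a = g + 1"
    and "q4 a \<Longrightarrow> ((g+1)*a)*((g+1)*a) + (g+1)*a = g"
proof -
  show "q1 a \<Longrightarrow> a*a + a = g" unfolding q1_def by (simp add: nz)
  show "q2 a \<Longrightarrow> a*a + a = g + 1" unfolding q2_def by (simp add: nz)
  show "q3 a \<Longrightarrow> (g*a)*(g*a) + g*a = g + 1"
  proof -
    assume "q3 a"
    then have r1: "a*a = g*a + a + 1" unfolding q3_def .
    have r2: "a*(a*x) = g*(a*x) + a*x + x" for x by (metis r1 distrib_right mult.assoc mult_1)
    show ?thesis by (simp add: nz r1 r2)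
  qed
  show "q4 a \<Longrightarrow> ((g+1)*a)*((g+1)*a) + (g+1)*a = g"
  proof -
    assume "q4 a"
    then have r1: "a*a = g*a + 1" unfolding q4_def .
    have r2: "a*(a*x) = g*(a*x) + x" for x by (metis r1 distrib_right mult.assoc mult_1)
    show ?thesis by (simp add: nz r1 r2)
  qed
qed

lemma no_fam_2mod4:
  assumes m: "n mod 4 = 2"
  shows "\<not> q1 a" "\<not> q2 a" "\<not> q3 a" "\<not> q4 a"
proof -
  note t = trF4(1)[OF m]
  show "\<not> q1 a" proof assume "q1 a" from T1n[OF fam_z(1)[OF this]] t show False by simp qed
  show "\<not> q2 a" proof assume "q2 a" from T1n[OF fam_z(2)[OF this]] t show False by simp qed
  show "\<not> q3 a" proof assume "q3 a" from T1n[OF fam_z(3)[OF this]] t show False by simp qed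
  show "\<not> q4 a" proof assume "q4 a" from T1n[OF fam_z(4)[OF this]] t show False by simp qed
qed

lemma q4_rules:
  assumes "q4 a"
  shows "a*a = g*a + 1" "a*(a*x) = g*(a*x) + x"
proof -
  show r1: "a*a = g*a + 1" using assms unfolding q4_def .
  show "a*(a*x) = g*(a*x) + x" by (metis r1 distrib_right mult.assoc mult_1)
qed

lemma q4_tr:
  assumes q: "q4 a"
  shows "(a*g)^(2^4) = a*g" "tr (a*g) 4 = 1"
proof -
  note r = q4_rules[OF q]
  have d2: "(a*g)^2 = a + g + 1" by (simp add: power2_eq_square nz r)
  have d4: "(a*g)^4 = a*g + g + 1"
  proof -
    have "(a*g)^4 = ((a*g)^2)^2" by (simp add: power_mult[symmetric])
    also have "\<dots> = a*g + g + 1" unfolding d2 by (simp add: power2_eq_square nz r)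
    finally show ?thesis .
  qed
  have d8: "(a*g)^8 = a + 1"
  proof -
    have "(a*g)^8 = ((a*g)^4)^2" by (simp add: power_mult[symmetric])
    also have "\<dots> = a + 1" unfolding d4 by (simp add: power2_eq_square nz r)
    finally show ?thesis .
  qed
  show "(a*g)^(2^4) = a*g"
  proof -
    have "(a*g)^(2^4) = ((a*g)^8)^2" by (simp add: power_mult[symmetric])
    also have "\<dots> = a*g" unfolding d8 by (simp add: power2_eq_square nz r)
    finally show ?thesis .
  qed
  have "tr (a*g) 4 = a*g + (a*g)^2 + (a*g)^4 + (a*g)^8"
    by (simp add: tr_def eval_nat_numeral)
  also have "\<dots> = 1" unfolding d2 d4 d8 by (simp add: nz)
  finally show "tr (a*g) 4 = 1" .
qed

lemma tr_ag:
  assumes q: "q4 a"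
  shows "n mod 8 = 4 \<Longrightarrow> tr (a*g) n = 1" and "n mod 8 = 0 \<Longrightarrow> tr (a*g) n = 0"
proof -
  have "n = (n div 4) * 4" if "n mod 8 = 4 \<or> n mod 8 = 0" using that by presburger
  then have e: "n mod 8 = 4 \<or> n mod 8 = 0 \<Longrightarrow> tr (a*g) n = of_nat (n div 4)"
    using tr_mult[OF q4_tr(1)[OF q], of "n div 4"] q4_tr(2)[OF q] by (metis mult.right_neutral)
  show "n mod 8 = 4 \<Longrightarrow> tr (a*g) n = 1"
  proof -
    assume m: "n mod 8 = 4"
    then have "odd (n div 4)" by presburger
    then show ?thesis using e m of_nat_c2 by simp
  qed
  show "n mod 8 = 0 \<Longrightarrow> tr (a*g) n = 0"
  proof -
    assume m: "n mod 8 = 0"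
    then have "even (n div 4)" by presburger
    then show ?thesis using e m of_nat_c2 by simp
  qed
qed

lemma q4_lam:
  assumes q: "q4 a"
  shows "g*a + 1 \<noteq> 0" and "Qp a a ((g*a+1)*w) = w*w + w + a*g"
proof -
  note r = q4_rules[OF q]
  show "Qp a a ((g*a+1)*w) = w*w + w + a*g" unfolding Qp_def by (simp add: nz r)
  show "g*a + 1 \<noteq> 0"
  proof
    assume "g*a + 1 = 0"
    then have "g*a = 1" by (simp add: add_eq0)
    then have "a = g + 1" using ginv g0 by (metis inverse_unique)
    then show False using r(1) g0 by (simp add: nz)
  qed
qed

lemma q4_noroot:
  assumes m: "n mod 8 = 4" and q: "q4 a"
  shows "Qp a a y \<noteq> 0"
proof
  assume y: "Qp a a y = 0"
  define w where "w = y * inverse (g*a+1)"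
  have "y = (g*a+1)*w" unfolding w_def using q4_lam(1)[OF q] by simp
  then have e: "Qp a a ((g*a+1)*w) = 0" using y by simp
  have "w*w + w + a*g = 0" using q4_lam(2)[OF q, of w] e by metis
  then have "w*w + w = a*g" by (simp only: add_eq0)
  from T1n[OF this] tr_ag(1)[OF q m] show False by simp
qed

end

context ctx begin

lemma ub:
  shows "card {x. E a b x} \<le> 5"
   and "n mod 4 = 2 \<Longrightarrow> card {x. E a b x} \<le> 3"
   and "n mod 8 = 4 \<Longrightarrow> card {x. E a b x} \<le> 4"
proof -
  have main: "card {x. E a b x} \<le> 5 \<and> (n mod 4 = 2 \<longrightarrow> card {x. E a b x} \<le> 3)
     \<and> (n mod 8 = 4 \<longrightarrow> card {x. E a b x} \<le> 4)"
  proof (cases "a = 0")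
    case True
    then show ?thesis using a0_case[of b] by simp
  next
    case a0: False
    note cl = count_le[OF a0, of b]
    show ?thesis
    proof (cases "a = 1 \<or> a = g \<or> a = g+1")
      case True
      then show ?thesis using cl F4_case[OF True, of b] by simp
    next
      case False
      then have nf: "a \<noteq> 0" "a \<noteq> 1" "a \<noteq> g" "a \<noteq> g+1" using a0 by auto
      note st = ST_card[OF nf, of b]
      have g5: "card {x. E a b x} \<le> 5" using cl st(1) by simp
      have g3: "n mod 4 = 2 \<longrightarrow> card {x. E a b x} \<le> 3"
      proof
        assume m: "n mod 4 = 2"
        have "\<not> card {x \<in> TT a. E a b x} \<ge> 2" using st(2) no_fam_2mod4[OF m] by blast
        then show "card {x. E a b x} \<le> 3" using cl by simp
      qed
      have g4: "n mod 8 = 4 \<longrightarrow> card {x. E a b x} \<le> 4"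
      proof
        assume m: "n mod 8 = 4"
        show "card {x. E a b x} \<le> 4"
        proof (cases "card {x \<in> TT a. E a b x} \<ge> 3")
          case False
          then show ?thesis using cl by simp
        next
          case True
          from st(3)[OF True] have q: "q4 a" and e0: "E a b 0" by auto
          have "b*a = 1 + g*a" using e0 Ev(1)[OF nf] by simp
          also have "\<dots> = a*a" using q4_rules(1)[OF q] by (simp add: add.commute)
          finally have "b = a" using nf(1) by simp
          then have emp: "{x. x \<notin> TT a \<and> Qp a b x = 0} = {}" using q4_noroot[OF m q] by auto
          have "card {x. E a b x} \<le> card {x \<in> TT a. E a b x} + card {x. x \<notin> TT a \<and> Qp a b x = 0}"
            by (rule count_split[OF a0])
          then show ?thesis unfolding emp using st(1) by simp
        qed
      qed
      show ?thesis using g5 g3 g4 by blast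
    qed
  qed
  then show "card {x. E a b x} \<le> 5"
   and "n mod 4 = 2 \<Longrightarrow> card {x. E a b x} \<le> 3"
   and "n mod 8 = 4 \<Longrightarrow> card {x. E a b x} \<le> 4" by auto
qed

end

context ctx begin

lemma neq_via: "X + Y = k * (a + e) \<Longrightarrow> k \<noteq> 0 \<Longrightarrow> a \<noteq> e \<Longrightarrow> X \<noteq> (Y::'a)"
  by (metis add_eq0 mult_eq_0_iff xx)

lemma notin_TT: "x \<noteq> 0 \<Longrightarrow> x \<noteq> 1 \<Longrightarrow> x \<noteq> g \<Longrightarrow> x \<noteq> a \<Longrightarrow> x + a \<noteq> 1 \<Longrightarrow> x + a \<noteq> g \<Longrightarrow> x \<notin> TT a"
proof -
  assume h: "x \<noteq> 0" "x \<noteq> 1" "x \<noteq> g" "x \<noteq> a" "x + a \<noteq> 1" "x + a \<noteq> g"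
  have e: "a + 1 + a = 1" "a + g + a = g" by (simp_all add: nz)
  show "x \<notin> TT a" unfolding TT_def using h e by auto
qed

lemma gen_sol: "a \<noteq> 0 \<Longrightarrow> x \<notin> TT a \<Longrightarrow> Qp a b x = 0 \<Longrightarrow> E a b x"
  using generic by blast

lemma card_ge4: "x1 \<noteq> x2 \<Longrightarrow> x1 \<noteq> x3 \<Longrightarrow> x1 \<noteq> x4 \<Longrightarrow> x2 \<noteq> x3 \<Longrightarrow> x2 \<noteq> x4 \<Longrightarrow> x3 \<noteq> x4
  \<Longrightarrow> P x1 \<Longrightarrow> P x2 \<Longrightarrow> P x3 \<Longrightarrow> P x4 \<Longrightarrow> card {x::'a. P x} \<ge> 4"
proof -
  assume d: "x1 \<noteq> x2" "x1 \<noteq> x3" "x1 \<noteq> x4" "x2 \<noteq> x3" "x2 \<noteq> x4" "x3 \<noteq> x4"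
    and p: "P x1" "P x2" "P x3" "P x4"
  have "card {x1,x2,x3,x4} = 4" using d by simp
  moreover have "{x1,x2,x3,x4} \<subseteq> {x. P x}" using p by auto
  ultimately show ?thesis by (metis card_mono finite)
qed

lemma card_ge5: "x1 \<noteq> x2 \<Longrightarrow> x1 \<noteq> x3 \<Longrightarrow> x1 \<noteq> x4 \<Longrightarrow> x1 \<noteq> x5 \<Longrightarrow> x2 \<noteq> x3 \<Longrightarrow> x2 \<noteq> x4 \<Longrightarrow> x2 \<noteq> x5
  \<Longrightarrow> x3 \<noteq> x4 \<Longrightarrow> x3 \<noteq> x5 \<Longrightarrow> x4 \<noteq> x5
  \<Longrightarrow> P x1 \<Longrightarrow> P x2 \<Longrightarrow> P x3 \<Longrightarrow> P x4 \<Longrightarrow> P x5 \<Longrightarrow> card {x::'a. P x} \<ge> 5"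
proof -
  assume d: "x1 \<noteq> x2" "x1 \<noteq> x3" "x1 \<noteq> x4" "x1 \<noteq> x5" "x2 \<noteq> x3" "x2 \<noteq> x4" "x2 \<noteq> x5"
     "x3 \<noteq> x4" "x3 \<noteq> x5" "x4 \<noteq> x5"
    and p: "P x1" "P x2" "P x3" "P x4" "P x5"
  have "card {x1,x2,x3,x4,x5} = 5" using d by simp
  moreover have "{x1,x2,x3,x4,x5} \<subseteq> {x. P x}" using p by auto
  ultimately show ?thesis by (metis card_mono finite)
qed

lemma card_ge3: "x1 \<noteq> x2 \<Longrightarrow> x1 \<noteq> x3 \<Longrightarrow> x2 \<noteq> x3
  \<Longrightarrow> P x1 \<Longrightarrow> P x2 \<Longrightarrow> P x3 \<Longrightarrow> card {x::'a. P x} \<ge> 3"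
proof -
  assume d: "x1 \<noteq> x2" "x1 \<noteq> x3" "x2 \<noteq> x3" and p: "P x1" "P x2" "P x3"
  have "card {x1,x2,x3} = 3" using d by simp
  moreover have "{x1,x2,x3} \<subseteq> {x. P x}" using p by auto
  ultimately show ?thesis by (metis card_mono finite)
qed

lemma lb4:
  assumes m: "n mod 4 = 0"
  shows "\<exists>a b. card {x. E a b x} \<ge> 4"
proof -
  obtain a where a: "a*a + a = g + 1" using T2 trF4(2)[OF m] by blast
  have r1: "a*a = a + g + 1" using a by (metis add_eq0 add.assoc add.commute xxy)
  have r2: "a*(a*x) = a*x + g*x + x" for x by (metis r1 distrib_right mult.assoc mult_1)
  have nf: "a \<noteq> 0" "a \<noteq> 1" "a \<noteq> g" "a \<noteq> g+1"
  proof -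
    show "a \<noteq> 0"
    proof
      assume a0: "a = 0"
      have "g + 1 = a*a + a" using a by simp
      also have "\<dots> = 0" using a0 by simp
      finally show False using gp1 by simp
    qed
    show "a \<noteq> 1" proof assume "a = 1" then show False using a gp1 g0 g1 by (simp add: xx) qed
    show "a \<noteq> g" proof assume "a = g" then show False using a g1 g0 by (simp add: nz) qed
    show "a \<noteq> g+1" proof assume "a = g+1" then show False using a g1 g0 by (simp add: nz) qed
  qed
  define b where "b = (g+1)*a + g"
  define y where "y = g*a + g"
  have Ea: "E a b a" using Ev(4)[OF nf] unfolding b_def by (simp add: nz r1 r2)
  have Eg: "E a b g" using Ev(3)[OF nf] unfolding b_def by (simp add: nz r1 r2)
  have n1: "g + 1 \<notin> TT a"
  proof (rule notin_TT)
    show "g + 1 \<noteq> 0" "g + 1 \<noteq> 1" "g + 1 \<noteq> g" using F4dist by auto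
    show "g + 1 \<noteq> a" using nf by auto
    show "g + 1 + a \<noteq> 1" by (rule neq_via[of _ _ 1 a g]) (use nf in \<open>simp_all add: nz\<close>)
    show "g + 1 + a \<noteq> g" by (rule neq_via[of _ _ 1 a 1]) (use nf in \<open>simp_all add: nz\<close>)
  qed
  have n2: "y \<notin> TT a"
  proof (rule notin_TT)
    show "y \<noteq> 0" unfolding y_def by (rule neq_via[of _ _ g a 1]) (use nf g0 in \<open>simp_all add: nz\<close>)
    show "y \<noteq> 1" unfolding y_def by (rule neq_via[of _ _ g a g]) (use nf g0 in \<open>simp_all add: nz\<close>)
    show "y \<noteq> g" unfolding y_def by (rule neq_via[of _ _ g a 0]) (use nf g0 in \<open>simp_all add: nz\<close>)
    show "y \<noteq> a" unfolding y_def by (rule neq_via[of _ _ "g+1" a "g+1"]) (use nf gp1 in \<open>simp_all add: nz\<close>)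
    show "y + a \<noteq> 1" unfolding y_def by (rule neq_via[of _ _ "g+1" a 1]) (use nf gp1 in \<open>simp_all add: nz\<close>)
    show "y + a \<noteq> g" unfolding y_def by (rule neq_via[of _ _ "g+1" a 0]) (use nf gp1 in \<open>simp_all add: nz\<close>)
  qed
  have E1: "E a b (g+1)" by (rule gen_sol[OF nf(1) n1]) (simp add: Qp_def b_def nz r1 r2)
  have E2: "E a b y" by (rule gen_sol[OF nf(1) n2]) (simp add: Qp_def b_def y_def nz r1 r2)
  have d: "a \<noteq> g" "a \<noteq> g+1" "a \<noteq> y" "g \<noteq> g+1" "g \<noteq> y" "g+1 \<noteq> y"
  proof -
    show "a \<noteq> g" "a \<noteq> g+1" using nf by auto
    show "a \<noteq> y" "g \<noteq> y" using n2 by (auto simp: TT_def)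
    show "g \<noteq> g+1" by simp
    show "g+1 \<noteq> y" unfolding y_def by (rule neq_via[of _ _ g a "g+1"]) (use nf g0 in \<open>simp_all add: nz\<close>)
  qed
  have "card {x. E a b x} \<ge> 4" by (rule card_ge4[OF d Ea Eg E1 E2])
  then show ?thesis by blast
qed

lemma lb5:
  assumes m: "n mod 8 = 0"
  shows "\<exists>a b. card {x. E a b x} \<ge> 5"
proof -
  have m4: "n mod 4 = 0" using m by presburger
  obtain u where u: "u*u + u = g" using T2 trF4(2)[OF m4] by blast
  have ru1: "u*u = u + g" using u by (metis add_eq0 add.assoc add.commute xxy)
  have ru2: "u*(u*x) = u*x + g*x" for x by (metis ru1 distrib_right mult.assoc)
  define a where "a = g*u"
  have q: "q4 a" unfolding q4_def a_def by (simp add: nz ru1 ru2)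
  note r = q4_rules[OF q]
  have nf: "a \<noteq> 0" "a \<noteq> 1" "a \<noteq> g" "a \<noteq> g+1"
  proof -
    show "a \<noteq> 0" proof assume "a = 0" then show False using r(1) by simp qed
    show "a \<noteq> 1" proof assume "a = 1" then show False using r(1) g0 g1 by (simp add: nz) qed
    show "a \<noteq> g" proof assume "a = g" then show False using r(1) g0 g1 by (simp add: nz) qed
    show "a \<noteq> g+1" proof assume "a = g+1" then show False using r(1) g0 g1 by (simp add: nz) qed
  qed
  have E0: "E a a 0" using Ev(1)[OF nf] by (simp add: nz r)
  have Eg: "E a a g" using Ev(3)[OF nf] by (simp add: nz r)
  have E1: "E a a (a+1)" using Ev(5)[OF nf] by (simp add: nz r)
  obtain z where z: "z*z + z = a*g" using T2 tr_ag(2)[OF q m] by blast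
  define l where "l = g*a + 1"
  have l0: "l \<noteq> 0" unfolding l_def by (rule q4_lam(1)[OF q])
  define y1 where "y1 = l*z"
  define y2 where "y2 = l*(z+1)"
  have Q1: "Qp a a y1 = 0" unfolding y1_def l_def q4_lam(2)[OF q] using z by (simp only: add_eq0)
  have Q2: "Qp a a y2 = 0" unfolding y2_def l_def q4_lam(2)[OF q]
  proof -
    have "(z+1)*(z+1) + (z+1) = z*z + z" by (simp add: nz)
    then show "(z+1)*(z+1) + (z+1) + a*g = 0" using z by (simp only: add_eq0)
  qed
  have QT: "x \<in> TT a \<Longrightarrow> Qp a a x \<noteq> 0" for x
  proof -
    assume x: "x \<in> TT a"
    have v: "Qp a a 0 = g*(a+0)" "Qp a a 1 = 1*(a+g)" "Qp a a g = g*(a+g)"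
      "Qp a a a = 1*(a+0)" "Qp a a (a+1) = g*(a+1)" "Qp a a (a+g) = 1*(a+(g+1))"
      unfolding Qp_def by (simp_all add: nz r)
    have "k*(a+e) \<noteq> 0" if "k \<noteq> 0" "a \<noteq> e" for k e using that by (simp add: add_eq0)
    then show ?thesis using x v nf g0 unfolding TT_def by auto
  qed
  have y1T: "y1 \<notin> TT a" using QT Q1 by blast
  have y2T: "y2 \<notin> TT a" using QT Q2 by blast
  have Ey1: "E a a y1" by (rule gen_sol[OF nf(1) y1T Q1])
  have Ey2: "E a a y2" by (rule gen_sol[OF nf(1) y2T Q2])
  have d: "0 \<noteq> g" "0 \<noteq> a+1" "0 \<noteq> y1" "0 \<noteq> y2" "g \<noteq> a+1" "g \<noteq> y1" "g \<noteq> y2"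
     "a+1 \<noteq> y1" "a+1 \<noteq> y2" "y1 \<noteq> y2"
  proof -
    show "0 \<noteq> g" using g0 by simp
    show "0 \<noteq> a+1" using nf by (simp add: add_eq0)
    show "g \<noteq> a+1" using nf by (metis add_eq0 add.assoc xx add_0)
    show "0 \<noteq> y1" "0 \<noteq> y2" "g \<noteq> y1" "g \<noteq> y2" "a+1 \<noteq> y1" "a+1 \<noteq> y2"
      using y1T y2T unfolding TT_def by auto
    show "y1 \<noteq> y2" unfolding y1_def y2_def using l0 by (simp add: distrib_left)
  qed
  have "card {x. E a a x} \<ge> 5" by (rule card_ge5[OF d E0 Eg E1 Ey1 Ey2])
  then show ?thesis by blast
qed

lemma M_id: "b*(a+g) = 1 \<Longrightarrow> (a+g) * Qp a b y = y*y + (g*a+1)*y + g*a*(a+g)"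
proof -
  assume h: "b*(a+g) = 1"
  have "(a+g) * Qp a b y = (b*(a+g))*(y*y + a*y) + (a+g)*((1+g)*y + a*g)"
    unfolding Qp_def by (simp add: algebra_simps)
  also have "\<dots> = y*y + (g*a+1)*y + g*a*(a+g)" unfolding h by (simp add: nz)
  finally show ?thesis .
qed

lemma lb3:
  assumes m: "n mod 4 = 2"
  shows "\<exists>a b. card {x. E a b x} \<ge> 3"
proof -
  have "card {0,1,g,g+1::'a} \<le> 4" by (simp add: card_insert_le_m1)
  moreover have "(16::nat) \<le> 2^n"
  proof -
    have "(2::nat)^4 \<le> 2^n" using n4 by (rule power_increasing) simp
    then show ?thesis by simp
  qed
  ultimately have "\<not> (UNIV::'a set) \<subseteq> {0,1,g,g+1}"
  proof (intro notI)
    assume c4: "card {0,1,g,g+1::'a} \<le> 4" and c16: "(16::nat) \<le> 2^n" and "(UNIV::'a set) \<subseteq> {0,1,g,g+1}"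
    then have "card (UNIV::'a set) \<le> card {0,1,g,g+1::'a}" by (intro card_mono) auto
    then show False using c4 c16 card by simp
  qed
  then obtain z where z: "z \<noteq> 0" "z \<noteq> 1" "z \<noteq> g" "z \<noteq> g+1" by blast
  note trs = trF4(1)[OF m]
  have zz0: "z*z + z \<noteq> 0"
  proof
    assume "z*z + z = 0"
    moreover have "z*z + z = z*(z+1)" by (simp add: nz)
    ultimately show False using z by (simp add: add_eq0)
  qed
  have zz1: "z*z + z \<noteq> 1"
  proof
    assume "z*z + z = 1"
    moreover have "z*z + z + 1 = (z+g)*(z+(g+1))" by (simp add: nz)
    ultimately have "(z+g)*(z+(g+1)) = 0" by (simp add: xx)
    then show False using z by (simp add: add_eq0)
  qed
  have zzg: "z*z + z \<noteq> g" proof assume h: "z*z + z = g" from T1n[OF h] trs show False by simp qed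
  have zzg1: "z*z + z \<noteq> g+1" proof assume h: "z*z + z = g+1" from T1n[OF h] trs show False by simp qed
  define t where "t = z*z + z + g"
  have t: "t \<noteq> 0" "t \<noteq> 1" "t \<noteq> g" "t \<noteq> g+1"
    using zz0 zz1 zzg zzg1 unfolding t_def by (metis add_eq0 add.assoc add.commute xxy add_0)+
  define i where "i = inverse t"
  have it: "i * t = 1" unfolding i_def using t by simp
  have i: "i \<noteq> 0" "i \<noteq> 1" "i \<noteq> g" "i \<noteq> g+1"
  proof -
    show "i \<noteq> 0" unfolding i_def using t by simp
    show "i \<noteq> 1" unfolding i_def using t by (metis inverse_1 inverse_inverse_eq)
    show "i \<noteq> g" unfolding i_def using t ginv by (metis inverse_inverse_eq)
    show "i \<noteq> g+1" unfolding i_def using t ginv by (metis inverse_inverse_eq)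
  qed
  define a where "a = g*i + g + 1"
  have nf: "a \<noteq> 0" "a \<noteq> 1" "a \<noteq> g" "a \<noteq> g+1"
  proof -
    show "a \<noteq> 0" unfolding a_def by (rule neq_via[of _ _ g i g]) (use i g0 in \<open>simp_all add: nz\<close>)
    show "a \<noteq> 1" unfolding a_def by (rule neq_via[of _ _ g i 1]) (use i g0 in \<open>simp_all add: nz\<close>)
    show "a \<noteq> g" unfolding a_def by (rule neq_via[of _ _ g i "g+1"]) (use i g0 in \<open>simp_all add: nz\<close>)
    show "a \<noteq> g+1" unfolding a_def by (rule neq_via[of _ _ g i 0]) (use i g0 in \<open>simp_all add: nz\<close>)
  qed
  have ag: "a + g \<noteq> 0" using nf by (simp add: add_eq0)
  define b where "b = inverse (a+g)"
  have bag: "b*(a+g) = 1" unfolding b_def using ag by simp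
  have Eg: "E a b g" using Ev(3)[OF nf] bag by simp
  define y1 where "y1 = g + (g+1)*i*z*z"
  define y2 where "y2 = y1 + (g+1)*i"
  define M where "M y = y*y + (g*a+1)*y + g*a*(a+g)" for y
  have M1: "M y1 = 0"
  proof -
    have "M y1 = g + i*i*(g*(z*z*z*z) + g*(z*z) + 1)" unfolding M_def y1_def a_def by (simp add: nz)
    also have "\<dots> = g*((i*t)*(i*t)) + i*i*(g*(z*z*z*z) + g*(z*z) + 1)" unfolding it by simp
    also have "\<dots> = 0" unfolding t_def by (simp add: nz)
    finally show ?thesis .
  qed
  have M2: "M y2 = M y1" unfolding M_def y2_def a_def by (simp add: nz)
  have MT: "x \<in> TT a \<Longrightarrow> M x \<noteq> 0" for x
  proof -
    assume x: "x \<in> TT a"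
    have v: "M 0 = g*(a*(a+g))" "M 1 = g*(a*(a+(g+1)))" "M g = g*((a+g)*(a+g))"
      "M a = a*(a+g)" "M (a+1) = a*a" "M (a+g) = (a+g)*(a+(g+1))"
      unfolding M_def by (simp_all add: nz)
    have ne: "a + e \<noteq> 0" if "a \<noteq> e" for e using that by (simp add: add_eq0)
    show ?thesis using x v nf g0 ne[of g] ne[of "g+1"] unfolding TT_def by auto
  qed
  have Q: "Qp a b y = 0" if "M y = 0" for y
  proof -
    have "(a+g) * Qp a b y = 0" using M_id[OF bag] that unfolding M_def by simp
    then show ?thesis using ag by simp
  qed
  have y1T: "y1 \<notin> TT a" using MT M1 by blast
  have y2T: "y2 \<notin> TT a" using MT M1 M2 by auto
  have Ey1: "E a b y1" by (rule gen_sol[OF nf(1) y1T Q[OF M1]])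
  have Ey2: "E a b y2" using M1 M2 by (intro gen_sol[OF nf(1) y2T Q]) simp
  have d: "g \<noteq> y1" "g \<noteq> y2" "y1 \<noteq> y2"
  proof -
    show "g \<noteq> y1" "g \<noteq> y2" using y1T y2T unfolding TT_def by auto
    show "y1 \<noteq> y2" unfolding y2_def using i gp1 by simp
  qed
  have "card {x. E a b x} \<ge> 3" by (rule card_ge3[OF d Eg Ey1 Ey2])
  then show ?thesis by blast
qed

end

lemma F4_elt:
  fixes x :: "'a::field"
  assumes two: "(1::'a)+1 = 0" and x4: "x^4 = x" and x0: "x \<noteq> 0" and x1: "x \<noteq> 1"
  shows "x*x = x + 1"
proof -
  have xx: "y + y = 0" for y :: 'a using two by (metis distrib_left mult.right_neutral mult_zero_right)
  have "x^4 = x * x^3" by (simp add: eval_nat_numeral)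
  then have "x * x^3 = x * 1" using x4 by simp
  then have x3: "x^3 = 1" using x0 by simp
  have "(x + 1) * (x*x + x + 1) = x^3 + 1 + (x*x + x*x) + (x + x)" by (simp add: algebra_simps eval_nat_numeral)
  also have "\<dots> = 0" by (simp only: x3 xx add_0_right two)
  finally have p: "(x + 1) * (x*x + x + 1) = 0" .
  have "x + 1 \<noteq> 0"
  proof
    assume "x + 1 = 0"
    then have "x = (x + 1) + 1" using xx by (metis add.assoc add_0_right two)
    then show False using x1 \<open>x + 1 = 0\<close> by simp
  qed
  then have "x*x + x + 1 = 0" using p by simp
  then have "x*x = (x*x + x + 1) + (x + 1)" using xx by (metis add.assoc add_0_right)
  then show ?thesis using \<open>x*x + x + 1 = 0\<close> by simp
qed

lemma Inv_eq:
  fixes x :: "'a::{field,finite}"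
  assumes card: "card (UNIV::'a set) = 2^n" and n: "n \<ge> 2"
  shows "Inv n x = inverse x"
proof -
  have ge: "(2::nat)^n \<ge> 4"
  proof -
    have "(2::nat)^2 \<le> 2^n" using n by (rule power_increasing) simp
    then show ?thesis by simp
  qed
  show ?thesis
  proof (cases "x = 0")
    case True
    then show ?thesis unfolding Inv_def using ge by simp
  next
    case False
    have "x^(2^n - 2) * (x*x) = x^(2^n - 2 + 2)" by (simp add: power_add power2_eq_square)
    also have "2^n - 2 + 2 = card (UNIV::'a set)" using ge card by simp
    also have "x ^ card (UNIV::'a set) = x" by (rule pow_card_eq)
    finally have "(x^(2^n - 2) * x) * x = 1 * x" by (simp add: mult.assoc)
    then have "x^(2^n - 2) * x = 1" using False by simp
    then show ?thesis unfolding Inv_def by (metis inverse_unique mult.commute)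
  qed
qed

lemma cDelta_sym:
  fixes F :: "'a::{field,finite} \<Rightarrow> 'a"
  assumes two: "(1::'a) + 1 = 0" and c0: "c \<noteq> 0"
  shows "cDelta F c a b = cDelta F (inverse c) a (b * inverse c)"
proof -
  have xx: "y + y = 0" for y :: 'a using two by (metis distrib_left mult.right_neutral mult_zero_right)
  have aa: "y + a + a = y" for y using xx by (metis add.assoc add_0_right)
  let ?S1 = "{x. F (x + a) + c * F x = b}"
  let ?S2 = "{x. F (x + a) + inverse c * F x = b * inverse c}"
  have eqv: "F x + inverse c * F (x + a) = b * inverse c \<longleftrightarrow> F (x + a) + c * F x = b" for x
  proof -
    have "F x + inverse c * F (x + a) = b * inverse c \<longleftrightarrow> c * (F x + inverse c * F (x + a)) = c * (b * inverse c)"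
      using c0 by simp
    also have "c * (F x + inverse c * F (x + a)) = c * F x + F (x + a)"
      using c0 by (simp add: distrib_left mult.assoc[symmetric])
    also have "c * (b * inverse c) = b" using c0 by simp
    also have "(c * F x + F (x + a) = b) \<longleftrightarrow> F (x + a) + c * F x = b" by (simp add: add.commute)
    finally show ?thesis .
  qed
  have img: "(\<lambda>x. x + a) ` ?S1 = ?S2"
  proof
    show "(\<lambda>x. x + a) ` ?S1 \<subseteq> ?S2" using eqv aa by auto
    show "?S2 \<subseteq> (\<lambda>x. x + a) ` ?S1"
    proof
      fix y assume "y \<in> ?S2"
      then have h: "F (y + a) + inverse c * F y = b * inverse c" by simp
      have "F (y + a + a) + c * F (y + a) = b" using eqv[of "y+a"] h unfolding aa by simp
      then have "y + a \<in> ?S1" by (simp only: mem_Collect_eq)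
      moreover have "y = (y + a) + a" using aa by simp
      ultimately show "y \<in> (\<lambda>x. x + a) ` ?S1" by blast
    qed
  qed
  have "inj (\<lambda>x::'a. x + a)" by (simp add: inj_def)
  then have "card ((\<lambda>x. x + a) ` ?S1) = card ?S1" by (simp add: card_image inj_on_def)
  then show ?thesis unfolding cDelta_def using img by simp
qed

context ctx begin

lemma c_cases: assumes "c*c = c + 1" shows "c = g \<or> c = g + 1"
proof -
  have r2: "c*(c*x) = c*x + x" for x by (metis assms distrib_right mult.assoc mult_1)
  have "(c+g)*(c+(g+1)) = 0" by (simp add: nz assms r2)
  then show ?thesis by (simp add: add_eq0)
qed

lemma cDelta_E: "cDelta F g a b = card {x. E a b x}"
  unfolding cDelta_def E_def by simp

lemma cDU_val:
  assumes ub: "\<And>a b. card {x. E a b x} \<le> m" and lb: "\<exists>a b. card {x. E a b x} \<ge> m"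
  shows "cDU F g = m"
proof -
  have S: "{cDelta F g a b | a b. a \<noteq> 0 \<or> g \<noteq> 1} = (\<lambda>(a,b). card {x. E a b x}) ` UNIV"
    using g1 by (auto simp: cDelta_E)
  obtain a0 b0 where "card {x. E a0 b0 x} \<ge> m" using lb by blast
  then have "card {x. E a0 b0 x} = m" using ub[of a0 b0] by simp
  then have mS: "m \<in> (\<lambda>(a,b). card {x. E a b x}) ` UNIV" by force
  have "Max ((\<lambda>(a,b). card {x. E a b x}) ` UNIV) = m"
    by (rule Max_eqI) (use ub mS in auto)
  then show ?thesis unfolding cDU_def S .
qed

lemma cDU_swap: "cDU H (g+1) = cDU H g"
proof -
  have ig: "inverse (g+1) = g" using ginv by (metis inverse_inverse_eq)
  have gp: "g + 1 \<noteq> 1" using g0 by simp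
  have s1: "cDelta H (g+1) a b = cDelta H g a (b*g)" for a b
    using cDelta_sym[OF two gp1, of H a b] ig by simp
  have s2: "cDelta H g a b = cDelta H (g+1) a (b*(g+1))" for a b
    using cDelta_sym[OF two g0, of H a b] ginv by simp
  have "{cDelta H (g+1) a b | a b. a \<noteq> 0 \<or> g + 1 \<noteq> 1} = {cDelta H g a b | a b. a \<noteq> 0 \<or> g \<noteq> 1}"
  proof
    show "{cDelta H (g+1) a b | a b. a \<noteq> 0 \<or> g + 1 \<noteq> 1} \<subseteq> {cDelta H g a b | a b. a \<noteq> 0 \<or> g \<noteq> 1}"
      using s1 g1 by blast
    show "{cDelta H g a b | a b. a \<noteq> 0 \<or> g \<noteq> 1} \<subseteq> {cDelta H (g+1) a b | a b. a \<noteq> 0 \<or> g + 1 \<noteq> 1}"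
      using s2 gp by blast
  qed
  then show ?thesis unfolding cDU_def by simp
qed

end


theorem mainTheorem10:
  fixes n :: nat and g c :: "'a::{field,finite}"
  assumes "card (UNIV :: 'a set) = 2 ^ n"
    and "even n" and "n \<ge> 4"
    and "g ^ 4 = g" and "g \<noteq> 0" and "g \<noteq> 1"
    and "c ^ 4 = c" and "c \<noteq> 0" and "c \<noteq> 1"
  shows "(n mod 4 = 2 \<longrightarrow> cDU (Inv n \<circ> cyc3 g) c = 3)
       \<and> (n mod 8 = 4 \<longrightarrow> cDU (Inv n \<circ> cyc3 g) c = 4)
       \<and> (n mod 8 = 0 \<longrightarrow> cDU (Inv n \<circ> cyc3 g) c = 5)"
proof -
  have two: "(1::'a) + 1 = 0" using char2_from_card[OF assms(1)] assms(3) by simp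
  have gg: "g*g = g + 1" by (rule F4_elt[OF two assms(4,5,6)])
  have cc: "c*c = c + 1" by (rule F4_elt[OF two assms(7,8,9)])
  interpret C: ctx g n using assms gg by unfold_locales auto
  have Feq: "Inv n \<circ> cyc3 g = C.F"
  proof
    fix x show "(Inv n \<circ> cyc3 g) x = C.F x"
      unfolding C.F_def using Inv_eq[OF assms(1)] assms(3) by simp
  qed
  have cg: "cDU C.F c = cDU C.F g"
    using C.c_cases[OF cc] C.cDU_swap by auto
  show ?thesis unfolding Feq cg
  proof (intro conjI impI)
    assume m: "n mod 4 = 2"
    show "cDU C.F g = 3" by (rule C.cDU_val) (use C.ub(2)[OF m] C.lb3[OF m] in auto)
  next
    assume m: "n mod 8 = 4"
    then have m4: "n mod 4 = 0" by presburger
    show "cDU C.F g = 4" by (rule C.cDU_val) (use C.ub(3)[OF m] C.lb4[OF m4] in auto)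
  next
    assume m: "n mod 8 = 0"
    show "cDU C.F g = 5" by (rule C.cDU_val) (use C.ub(1) C.lb5[OF m] in auto)
  qed
qed


end
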